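(* Let $X = \{x\in\mathbb{R}^n_+ : A_x x \ge b_x\}$ and $Y = \{y\in\mathbb{R}^m_+ : A_y y\ge b_y\}$, and $Q\in\mathbb{R}^{n\times m}_{\ge 0}$. Assume $\min\{c^\top x + d^\top y : x = Qy,\ x\in X,\ y\in Y\}$ has a finite optimal value. Let $(\hat\gamma,\hat\nu)$ be an optimal solution of $$\max_{\gamma,\nu}\{\gamma^\top b_x + \nu^\top b_y : Q^\top A_x^\top\gamma + A_y^\top\nu \le Q^\top c + d,\ \gamma\ge 0,\ \nu\ge 0\}$$ (the dual of $\min\{(Q^\top c + d)^\top y : A_x Q y\ge b_x,\ A_y y\ge b_y,\ y\ge 0\}$), and set $\hat\alpha := c - A_x^\top\hat\gamma$. Then $\hat\alpha$ is an optimal solution of $$\max_{\alpha\in\mathbb{R}^n}\{\sigma_X(c - \alpha) + \sigma_Y(Q^\top\alpha + d)\}.$$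
   Context: For $\mathcal{X}\subseteq\mathbb{R}^k$, $\sigma_{\mathcal{X}}(\alpha) := \inf_{x\in\mathcal{X}}\alpha^\top x$. $c\in\mathbb{R}^n$, $d\in\mathbb{R}^m$, and $A_x, b_x, A_y, b_y$ are matrices/vectors of compatible dimensions. *)

theory Defs
  imports "HOL-Analysis.Analysis"
begin

text \<open>Support-type function: sigma_X(alpha) = inf over x in X of alpha^T x, valued in the
extended reals (it may be -infinity; it is +infinity for empty X).\<close>
definition sigma :: "(real ^ 'k) set \<Rightarrow> real ^ 'k \<Rightarrow> ereal" where
  "sigma S a = (INF x\<in>S. ereal (a \<bullet> x))"

definition vle :: "real ^ 'k \<Rightarrow> real ^ 'k \<Rightarrow> bool" where
  "vle u v \<longleftrightarrow> (\<forall>i. u $ i \<le> v $ i)"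

definition polyh :: "real ^ 'n ^ 'p \<Rightarrow> real ^ 'p \<Rightarrow> (real ^ 'n) set" where
  "polyh A b = {x. vle 0 x \<and> vle b (A *v x)}"

end

theory Submission
  imports Defs
begin

lemma transp_inner: "(transpose A *v x) \<bullet> y = x \<bullet> (A *v (y::real^_))"
  by (metis dot_lmul_matrix transpose_matrix_vector)

lemma farkas_dual:
  fixes A1 :: "real^'m^'p" and b1 :: "real^'p" and A2 :: "real^'m^'q" and b2 :: "real^'q"
    and w :: "real^'m" and P :: real
  assumes lb: "\<And>y. vle 0 y \<Longrightarrow> vle b1 (A1 *v y) \<Longrightarrow> vle b2 (A2 *v y) \<Longrightarrow> P \<le> w \<bullet> y"
    and f0: "vle 0 y0" "vle b1 (A1 *v y0)" "vle b2 (A2 *v y0)"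
  shows "\<exists>g n. vle 0 g \<and> vle 0 n \<and> vle (transpose A1 *v g + transpose A2 *v n) w \<and> P \<le> g \<bullet> b1 + n \<bullet> b2"
proof (rule ccontr)
  assume nex: "\<not> ?thesis"
  define C where "C = {(transpose A1 *v g + transpose A2 *v n + s, g \<bullet> b1 + n \<bullet> b2 - t) | g n s t.
       vle 0 g \<and> vle 0 n \<and> vle 0 s \<and> t \<ge> 0}"
  define G where "G = range (\<lambda>i. (transpose A1 *v axis i 1, b1$i)) \<union> range (\<lambda>k. (transpose A2 *v axis k 1, b2$k))
     \<union> range (\<lambda>j. (axis j 1, 0)) \<union> {(0, -1::real)}"
  have ccC: "convex_cone C"
    unfolding convex_cone_iff
  proof (intro conjI ballI allI impI)
    show "0 \<in> C" unfolding C_def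
      by (rule CollectI, rule exI[of _ 0], rule exI[of _ 0], rule exI[of _ 0], rule exI[of _ 0])
         (auto simp: vle_def zero_prod_def)
  next
    fix x y assume "x \<in> C" "y \<in> C"
    then obtain g n s t g' n' s' t' where
      x: "x = (transpose A1 *v g + transpose A2 *v n + s, g \<bullet> b1 + n \<bullet> b2 - t)" "vle 0 g" "vle 0 n" "vle 0 s" "t \<ge> 0"
      and y: "y = (transpose A1 *v g' + transpose A2 *v n' + s', g' \<bullet> b1 + n' \<bullet> b2 - t')" "vle 0 g'" "vle 0 n'" "vle 0 s'" "t' \<ge> 0"
      unfolding C_def by blast
    show "x + y \<in> C" unfolding C_def
      by (rule CollectI, rule exI[of _ "g+g'"], rule exI[of _ "n+n'"], rule exI[of _ "s+s'"], rule exI[of _ "t+t'"])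
         (use x y in \<open>auto simp: vle_def algebra_simps inner_add_left\<close>)
  next
    fix x and c :: real assume "x \<in> C" "0 \<le> c"
    then obtain g n s t where
      x: "x = (transpose A1 *v g + transpose A2 *v n + s, g \<bullet> b1 + n \<bullet> b2 - t)" "vle 0 g" "vle 0 n" "vle 0 s" "t \<ge> 0"
      unfolding C_def by blast
    show "c *\<^sub>R x \<in> C" unfolding C_def
      by (rule CollectI, rule exI[of _ "c *\<^sub>R g"], rule exI[of _ "c *\<^sub>R n"], rule exI[of _ "c *\<^sub>R s"], rule exI[of _ "c * t"])
         (use x \<open>0 \<le> c\<close> in \<open>auto simp: vle_def algebra_simps\<close>)
  qed
  have GC: "G \<subseteq> C"
  proof -
    have ax: "vle 0 (axis i (1::real))" for i :: "'z::finite"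
      by (auto simp: vle_def axis_def)
    have "(transpose A1 *v axis i 1, b1$i) \<in> C" for i
      unfolding C_def
      by (rule CollectI, rule exI[of _ "axis i 1"], rule exI[of _ 0], rule exI[of _ 0], rule exI[of _ 0])
         (use ax in \<open>auto simp: inner_axis' vle_def\<close>)
    moreover have "(transpose A2 *v axis i 1, b2$i) \<in> C" for i
      unfolding C_def
      by (rule CollectI, rule exI[of _ 0], rule exI[of _ "axis i 1"], rule exI[of _ 0], rule exI[of _ 0])
         (use ax in \<open>auto simp: inner_axis' vle_def\<close>)
    moreover have "(axis i 1, 0) \<in> C" for i
      unfolding C_def
      by (rule CollectI, rule exI[of _ 0], rule exI[of _ 0], rule exI[of _ "axis i 1"], rule exI[of _ 0])
         (use ax in \<open>auto simp: vle_def\<close>)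
    moreover have "(0, -1) \<in> C"
      unfolding C_def
      by (rule CollectI, rule exI[of _ 0], rule exI[of _ 0], rule exI[of _ 0], rule exI[of _ 1])
         (auto simp: vle_def)
    ultimately show ?thesis unfolding G_def by auto
  qed
  define S where "S = convex_cone hull G"
  have SC: "S \<subseteq> C" unfolding S_def by (rule hull_minimal[where S=convex_cone, OF GC ccC])
  have "finite G" unfolding G_def by simp
  then have clS: "closed S" unfolding S_def by (rule closed_convex_cone_hull)
  have cvS: "convex S" unfolding S_def by (rule convex_convex_cone_hull)
  have notin: "(w, P) \<notin> C"
  proof
    assume "(w, P) \<in> C"
    then obtain g n s t where
      x: "(w, P) = (transpose A1 *v g + transpose A2 *v n + s, g \<bullet> b1 + n \<bullet> b2 - t)" "vle 0 g" "vle 0 n" "vle 0 s" "t \<ge> 0"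
      unfolding C_def by blast
    then have "vle (transpose A1 *v g + transpose A2 *v n) w" "P \<le> g \<bullet> b1 + n \<bullet> b2"
      by (auto simp: vle_def)
    with x nex show False by blast
  qed
  then have "(w, P) \<notin> S" using SC by blast
  from separating_hyperplane_closed_point[OF cvS clS this]
  obtain a \<beta> where a1: "a \<bullet> (w, P) < \<beta>" and a2: "\<forall>x\<in>S. a \<bullet> x > \<beta>" by blast
  have "0 \<in> S" unfolding S_def by (rule convex_cone_hull_contains_0)
  with a2 have b0: "\<beta> < 0" by force
  have gen: "a \<bullet> x \<ge> 0" if "x \<in> G" for x
  proof (rule ccontr)
    assume neg: "\<not> a \<bullet> x \<ge> 0"
    have xS: "x \<in> S" unfolding S_def using that by (rule hull_inc)
    define t where "t = 2 * \<beta> / (a \<bullet> x)"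
    have "t \<ge> 0" unfolding t_def using neg b0 by (simp add: divide_nonpos_neg)
    then have "t *\<^sub>R x \<in> S" unfolding S_def using xS S_def convex_cone_hull_mul by blast
    with a2 have "a \<bullet> (t *\<^sub>R x) > \<beta>" by blast
    moreover have "a \<bullet> (t *\<^sub>R x) = 2 * \<beta>" unfolding t_def using neg by simp
    ultimately show False using b0 by simp
  qed
  obtain y l where a: "a = (y, l)" by (cases a)
  have y0: "vle 0 y"
    unfolding vle_def proof
    fix j have "(axis j 1, 0) \<in> G" unfolding G_def by blast
    from gen[OF this] show "0 $ j \<le> y $ j" by (simp add: a inner_axis)
  qed
  have l0: "l \<le> 0"
  proof -
    have "(0, -1) \<in> G" unfolding G_def by blast
    from gen[OF this] show ?thesis by (simp add: a)
  qed
  have r1: "(A1 *v y) $ i + l * b1 $ i \<ge> 0" for i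
  proof -
    have "(transpose A1 *v axis i 1, b1$i) \<in> G" unfolding G_def by blast
    from gen[OF this] show ?thesis by (simp add: a inner_commute[of y] dot_lmul_matrix inner_axis')
  qed
  have r2: "(A2 *v y) $ i + l * b2 $ i \<ge> 0" for i
  proof -
    have "(transpose A2 *v axis i 1, b2$i) \<in> G" unfolding G_def by blast
    from gen[OF this] show ?thesis by (simp add: a inner_commute[of y] dot_lmul_matrix inner_axis')
  qed
  have wy: "y \<bullet> w + l * P < 0" using a1 b0 by (simp add: a)
  show False
  proof (cases "l < 0")
    case True
    define y' where "y' = (1 / (-l)) *\<^sub>R y"
    have "vle 0 y'" using y0 True by (auto simp: y'_def vle_def divide_nonneg_neg)
    moreover have "vle b1 (A1 *v y')"
      unfolding vle_def proof
      fix i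
      have e: "(A1 *v y') $ i = (A1 *v y) $ i / (-l)"
        unfolding y'_def matrix_vector_mult_scaleR vector_scaleR_component by simp
      have "b1 $ i * (-l) \<le> (A1 *v y) $ i" using r1[of i] by (simp add: algebra_simps)
      then show "b1 $ i \<le> (A1 *v y') $ i"
        unfolding e using True by (metis neg_0_less_iff_less pos_le_divide_eq)
    qed
    moreover have "vle b2 (A2 *v y')"
      unfolding vle_def proof
      fix i
      have e: "(A2 *v y') $ i = (A2 *v y) $ i / (-l)"
        unfolding y'_def matrix_vector_mult_scaleR vector_scaleR_component by simp
      have "b2 $ i * (-l) \<le> (A2 *v y) $ i" using r2[of i] by (simp add: algebra_simps)
      then show "b2 $ i \<le> (A2 *v y') $ i"
        unfolding e using True by (metis neg_0_less_iff_less pos_le_divide_eq)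
    qed
    ultimately have "P \<le> w \<bullet> y'" by (rule lb)
    moreover have "w \<bullet> y' = (y \<bullet> w) / (-l)" by (simp add: y'_def inner_commute)
    ultimately have "P \<le> (y \<bullet> w) / (-l)" by simp
    then have "P * (-l) \<le> y \<bullet> w" using True by (simp add: field_simps)
    then show False using wy by (simp add: mult.commute)
  next
    case False
    then have l: "l = 0" using l0 by simp
    have wy': "w \<bullet> y < 0" using wy l by (simp add: inner_commute)
    have P0: "P \<le> w \<bullet> y0" using lb f0 by blast
    define t where "t = (w \<bullet> y0 - P + 1) / (-(w \<bullet> y))"
    have t0: "t \<ge> 0" unfolding t_def using P0 wy' by (simp add: divide_nonneg_neg)
    define z where "z = y0 + t *\<^sub>R y"
    have "vle 0 z" using f0(1) y0 t0 by (auto simp: z_def vle_def)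
    moreover have "vle b1 (A1 *v z)"
      unfolding vle_def proof
      fix i from r1[of i] f0(2) t0 show "b1 $ i \<le> (A1 *v z) $ i"
        by (simp add: z_def l matrix_vector_mult_scaleR matrix_vector_right_distrib vle_def add_increasing2)
    qed
    moreover have "vle b2 (A2 *v z)"
      unfolding vle_def proof
      fix i from r2[of i] f0(3) t0 show "b2 $ i \<le> (A2 *v z) $ i"
        by (simp add: z_def l matrix_vector_mult_scaleR matrix_vector_right_distrib vle_def add_increasing2)
    qed
    ultimately have "P \<le> w \<bullet> z" by (rule lb)
    moreover have "w \<bullet> z = w \<bullet> y0 + t * (w \<bullet> y)" by (simp add: z_def inner_add_right)
    moreover have "t * (w \<bullet> y) = -(w \<bullet> y0 - P + 1)" unfolding t_def using wy' by simp
    ultimately show False by simp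
  qed
qed

theorem mainTheorem9:
  fixes Ax :: "real ^ 'n ^ 'p" and b_x :: "real ^ 'p"
    and Ay :: "real ^ 'm ^ 'q" and b_y :: "real ^ 'q"
    and Q :: "real ^ 'm ^ 'n" and c :: "real ^ 'n" and d :: "real ^ 'm"
    and gh :: "real ^ 'p" and nh :: "real ^ 'q"
  assumes Qnonneg: "\<forall>i j. Q $ i $ j \<ge> 0"
    and finite_val: "\<bar>INF z\<in>{(x, y). x = Q *v y \<and> x \<in> polyh Ax b_x \<and> y \<in> polyh Ay b_y}.
                        ereal (c \<bullet> fst z + d \<bullet> snd z)\<bar> \<noteq> \<infinity>"
    and dual_feas: "vle (transpose Q *v (transpose Ax *v gh) + transpose Ay *v nh)
                        (transpose Q *v c + d)" "vle 0 gh" "vle 0 nh"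
    and dual_opt: "\<forall>g n. vle (transpose Q *v (transpose Ax *v g) + transpose Ay *v n)
                        (transpose Q *v c + d) \<and> vle 0 g \<and> vle 0 n
                      \<longrightarrow> g \<bullet> b_x + n \<bullet> b_y \<le> gh \<bullet> b_x + nh \<bullet> b_y"
  shows "\<forall>\<alpha>. sigma (polyh Ax b_x) (c - \<alpha>) + sigma (polyh Ay b_y) (transpose Q *v \<alpha> + d)
            \<le> sigma (polyh Ax b_x) (c - (c - transpose Ax *v gh))
               + sigma (polyh Ay b_y) (transpose Q *v (c - transpose Ax *v gh) + d)"
proof -
  define X where "X = polyh Ax b_x"
  define Y where "Y = polyh Ay b_y"
  define F where "F = {(x, y). x = Q *v y \<and> x \<in> polyh Ax b_x \<and> y \<in> polyh Ay b_y}"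
  define I where "I = (INF z\<in>F. ereal (c \<bullet> fst z + d \<bullet> snd z))"
  define w where "w = transpose Q *v c + d"
  have Qpos: "vle 0 (Q *v y)" if "vle 0 y" for y
    using that Qnonneg unfolding vle_def by (auto simp: matrix_vector_mult_def intro!: sum_nonneg)
  have obj: "c \<bullet> (Q *v y) + d \<bullet> y = w \<bullet> y" for y
    by (simp add: w_def inner_add_left dot_lmul_matrix)
  have Ifin: "\<bar>I\<bar> \<noteq> \<infinity>" using finite_val unfolding I_def F_def by simp
  then have "F \<noteq> {}" unfolding I_def by (auto simp: top_ereal_def)
  then obtain x0 y0 where "(x0, y0) \<in> F" by auto
  then have x0: "x0 = Q *v y0" and y0X: "Q *v y0 \<in> X" and y0Y: "y0 \<in> Y"
    unfolding F_def X_def Y_def by auto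
  obtain P where IP: "I = ereal P" using Ifin by (cases I) auto
  have MQ: "(Ax ** Q) *v y = Ax *v (Q *v y)" for y by (simp add: matrix_vector_mul_assoc)
  have lb: "P \<le> w \<bullet> y" if "vle 0 y" "vle b_x ((Ax ** Q) *v y)" "vle b_y (Ay *v y)" for y
  proof -
    have "(Q *v y, y) \<in> F" unfolding F_def polyh_def using that Qpos MQ by auto
    then have "I \<le> ereal (c \<bullet> (Q *v y) + d \<bullet> y)" unfolding I_def by (rule INF_lower2) simp
    then show ?thesis using IP obj by simp
  qed
  have f0: "vle 0 y0" "vle b_x ((Ax ** Q) *v y0)" "vle b_y (Ay *v y0)"
    using y0X y0Y unfolding X_def Y_def polyh_def MQ by auto
  obtain g n where gn: "vle 0 g" "vle 0 n" "vle (transpose (Ax ** Q) *v g + transpose Ay *v n) w"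
      "P \<le> g \<bullet> b_x + n \<bullet> b_y"
    using farkas_dual[OF lb f0] by blast
  have "transpose (Ax ** Q) *v g = transpose Q *v (transpose Ax *v g)"
    by (simp only: matrix_transpose_mul matrix_vector_mul_assoc)
  then have "vle (transpose Q *v (transpose Ax *v g) + transpose Ay *v n) (transpose Q *v c + d)"
    using gn(3) unfolding w_def by simp
  then have "g \<bullet> b_x + n \<bullet> b_y \<le> gh \<bullet> b_x + nh \<bullet> b_y" using dual_opt gn(1,2) by blast
  then have PD: "P \<le> gh \<bullet> b_x + nh \<bullet> b_y" using gn(4) by linarith
  have R1: "ereal (gh \<bullet> b_x) \<le> sigma X (c - (c - transpose Ax *v gh))"
    unfolding sigma_def
  proof (rule INF_greatest)
    fix x assume "x \<in> X"
    then have "vle b_x (Ax *v x)" unfolding X_def polyh_def by auto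
    then have "gh \<bullet> b_x \<le> gh \<bullet> (Ax *v x)"
      using dual_feas(2) unfolding vle_def inner_vec_def
      by (auto intro!: sum_mono mult_left_mono)
    then show "ereal (gh \<bullet> b_x) \<le> ereal ((c - (c - transpose Ax *v gh)) \<bullet> x)"
      by (simp add: dot_lmul_matrix)
  qed
  have R2: "ereal (nh \<bullet> b_y) \<le> sigma Y (transpose Q *v (c - transpose Ax *v gh) + d)"
    unfolding sigma_def
  proof (rule INF_greatest)
    fix y assume "y \<in> Y"
    then have yb: "vle b_y (Ay *v y)" and y0: "vle 0 y" unfolding Y_def polyh_def by auto
    have "nh \<bullet> b_y \<le> nh \<bullet> (Ay *v y)"
      using yb dual_feas(3) unfolding vle_def inner_vec_def
      by (auto intro!: sum_mono mult_left_mono)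
    also have "\<dots> = (transpose Ay *v nh) \<bullet> y" by (simp add: dot_lmul_matrix)
    also have "\<dots> \<le> (transpose Q *v (c - transpose Ax *v gh) + d) \<bullet> y"
      unfolding inner_vec_def
    proof (rule sum_mono)
      fix i
      have eqv: "transpose Q *v (c - transpose Ax *v gh) + d = (transpose Q *v c + d) - transpose Q *v (transpose Ax *v gh)"
        by (simp only: matrix_vector_mult_diff_distrib) (simp add: algebra_simps)
      have "(transpose Q *v (transpose Ax *v gh) + transpose Ay *v nh) $ i \<le> (transpose Q *v c + d) $ i"
        using dual_feas(1) unfolding vle_def by blast
      then have "(transpose Ay *v nh) $ i \<le> (transpose Q *v (c - transpose Ax *v gh) + d) $ i"
        unfolding eqv vector_add_component vector_minus_component by linarith
      moreover have "0 \<le> y $ i" using y0 unfolding vle_def by simp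
      ultimately have "(transpose Ay *v nh) $ i * y $ i \<le> (transpose Q *v (c - transpose Ax *v gh) + d) $ i * y $ i"
        by (rule mult_right_mono)
      then show "(transpose Ay *v nh) $ i \<bullet> y $ i \<le> (transpose Q *v (c - transpose Ax *v gh) + d) $ i \<bullet> y $ i"
        by (simp only: inner_real_def)
    qed
    finally show "ereal (nh \<bullet> b_y) \<le> ereal ((transpose Q *v (c - transpose Ax *v gh) + d) \<bullet> y)"
      by simp
  qed
  show ?thesis
  proof
    fix \<alpha>
    have "sigma X (c - \<alpha>) + sigma Y (transpose Q *v \<alpha> + d) \<le> I"
      unfolding I_def
    proof (rule INF_greatest)
      fix z assume "z \<in> F"
      then obtain y where z: "z = (Q *v y, y)" and yX: "Q *v y \<in> X" and yY: "y \<in> Y"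
        unfolding F_def X_def Y_def by auto
      have "sigma X (c - \<alpha>) \<le> ereal ((c - \<alpha>) \<bullet> (Q *v y))"
        unfolding sigma_def using yX by (rule INF_lower)
      moreover have "sigma Y (transpose Q *v \<alpha> + d) \<le> ereal ((transpose Q *v \<alpha> + d) \<bullet> y)"
        unfolding sigma_def using yY by (rule INF_lower)
      ultimately have "sigma X (c - \<alpha>) + sigma Y (transpose Q *v \<alpha> + d)
          \<le> ereal ((c - \<alpha>) \<bullet> (Q *v y)) + ereal ((transpose Q *v \<alpha> + d) \<bullet> y)"
        by (rule add_mono)
      also have "\<dots> = ereal (c \<bullet> fst z + d \<bullet> snd z)"
        by (simp add: z inner_diff_left inner_add_left dot_lmul_matrix)
      finally show "sigma X (c - \<alpha>) + sigma Y (transpose Q *v \<alpha> + d) \<le> ereal (c \<bullet> fst z + d \<bullet> snd z)" .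
    qed
    also have "\<dots> \<le> ereal (gh \<bullet> b_x) + ereal (nh \<bullet> b_y)" using IP PD by simp
    also have "\<dots> \<le> sigma X (c - (c - transpose Ax *v gh))
               + sigma Y (transpose Q *v (c - transpose Ax *v gh) + d)"
      using R1 R2 by (rule add_mono)
    finally show "sigma (polyh Ax b_x) (c - \<alpha>) + sigma (polyh Ay b_y) (transpose Q *v \<alpha> + d)
            \<le> sigma (polyh Ax b_x) (c - (c - transpose Ax *v gh))
               + sigma (polyh Ay b_y) (transpose Q *v (c - transpose Ax *v gh) + d)"
      unfolding X_def Y_def .
  qed
qed

end
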